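(* Let $N\ge 2$ and $K\ge 2$ be integers, let $M=N^K$, and define costs $d_m=N-1$ for $m\in[1:N]$ and $d_m=N$ for $m\in[N+1:N^K]$. Let $C=\left(1+\frac1N+\frac1{N^2}+\cdots+\frac1{N^{K-1}}\right)^{-1}$ and fix $D$ with $1\le D\le 1/C$. Let $\mathcal{F}_D$ be the set of probability vectors $P=(p_1,\dots,p_{N^K})$ (i.e. $p_m\ge 0$, $\sum_m p_m=1$) satisfying $\frac{1}{N-1}\sum_{m=1}^{N^K}p_m d_m=D$. Let $U$ be the uniform distribution on $[1:N^K]$. (i) For every order $0<\alpha<\infty$ (including $\alpha=1$), the problem of minimizing $D_\alpha(P\,\|\,U)$ over $P\in\mathcal{F}_D$ has the unique minimizer $$p_m=\begin{cases}\dfrac{1-(N-1)(D-1)}{N}, & m\in[1:N],\\[2mm] \dfrac{(N-1)(D-1)}{N^K-N}, & m\in[N+1:N^K].\end{cases}$$ (ii) For $\alpha=\infty$, a distribution $P\in\mathcal{F}_D$ minimizes $D_\infty(P\,\|\,U)$ over $\mathcal{F}_D$ if and only if $p_m=\frac{1-(N-1)(D-1)}{N}$ for all $m\in[1:N]$, and $(p_m)_{m\in[N+1:N^K]}$ is any nonnegative vector with $\sum_{m=N+1}^{N^K}p_m=(N-1)(D-1)$ and $p_m\le \frac{1-(N-1)(D-1)}{N}$ for each $m\in[N+1:N^K]$.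
   Context: Notation: $[i:j]=\{i,i+1,\dots,j\}$. For probability vectors $P=(p_1,\dots,p_M)$, $U=(u_1,\dots,u_M)$ with $u_m>0$, the Rényi divergence of order $\alpha$ (natural logarithm) is $D_\alpha(P\|U)=\frac{1}{\alpha-1}\log\sum_{m=1}^M p_m^\alpha u_m^{1-\alpha}$ for $0<\alpha<\infty$, $\alpha\neq1$; for $\alpha=1$ it is the Kullback–Leibler divergence $D_1(P\|U)=\sum_m p_m\log\frac{p_m}{u_m}$ (with $0\log 0=0$); and $D_\infty(P\|U)=\log\max_m \frac{p_m}{u_m}$. (Interpretation: the $N^K$ query options of the symmetric Tian–Sun–Chen PIR scheme with $N$ databases, $K$ messages and message length $N-1$, where the first $N$ options have download cost $N-1$ and the rest cost $N$; $D$ is the expected download cost normalized by the message length $N-1$.) *)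

theory Defs
  imports Complex_Main
begin

text \<open>Probability vectors are functions on indices 1..M (values outside are ignored
  by the divergences; the feasible set below forces them to be 0).\<close>

definition renyi_div :: "real \<Rightarrow> nat \<Rightarrow> (nat \<Rightarrow> real) \<Rightarrow> (nat \<Rightarrow> real) \<Rightarrow> real" where
  "renyi_div \<alpha> M P U =
     (if \<alpha> = 1 then (\<Sum>m\<in>{1..M}. if P m = 0 then 0 else P m * ln (P m / U m))
      else (1 / (\<alpha> - 1)) * ln (\<Sum>m\<in>{1..M}. P m powr \<alpha> * U m powr (1 - \<alpha>)))"

definition renyi_div_inf :: "nat \<Rightarrow> (nat \<Rightarrow> real) \<Rightarrow> (nat \<Rightarrow> real) \<Rightarrow> real" where
  "renyi_div_inf M P U = ln (Max ((\<lambda>m. P m / U m) ` {1..M}))"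

definition tsc_cost :: "nat \<Rightarrow> nat \<Rightarrow> real" where
  "tsc_cost N m = (if m \<le> N then real N - 1 else real N)"

definition feasible :: "nat \<Rightarrow> nat \<Rightarrow> real \<Rightarrow> (nat \<Rightarrow> real) set" where
  "feasible N K D = {P. (\<forall>m. m \<notin> {1..N^K} \<longrightarrow> P m = 0)
      \<and> (\<forall>m\<in>{1..N^K}. 0 \<le> P m)
      \<and> (\<Sum>m\<in>{1..N^K}. P m) = 1
      \<and> (1 / (real N - 1)) * (\<Sum>m\<in>{1..N^K}. P m * tsc_cost N m) = D}"

end

theory Submission
  imports Defs
begin


lemma sign_aux:
  fixes \<xi> e :: real assumes "\<xi> > 0" "\<xi> \<noteq> 1" "e \<noteq> 0"
  shows "e * (\<xi> - 1) * (\<xi> powr e - 1) > 0"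
proof -
  have p: "\<xi> powr e = exp (e * ln \<xi>)" using assms by (simp add: powr_def mult.commute)
  have l: "ln \<xi> > 0 \<longleftrightarrow> \<xi> > 1" using assms by simp
  have l2: "ln \<xi> < 0 \<longleftrightarrow> \<xi> < 1" using assms by simp
  show ?thesis
  proof (cases "e > 0")
    case True
    then show ?thesis
    proof (cases "\<xi> > 1")
      case True
      then have "exp (e * ln \<xi>) > 1" using \<open>e>0\<close> l by simp
      then show ?thesis using True \<open>e>0\<close> p by simp
    next
      case False
      then have "\<xi> < 1" using assms by simp
      then have "exp (e * ln \<xi>) < 1" using \<open>e>0\<close> l2 by (simp add: mult_pos_neg)
      then show ?thesis using \<open>\<xi> < 1\<close> \<open>e>0\<close> p by (simp add: mult_pos_neg mult_neg_neg)
    qed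
  next
    case False
    then have e: "e < 0" using assms by simp
    then show ?thesis
    proof (cases "\<xi> > 1")
      case True
      then have "exp (e * ln \<xi>) < 1" using e l by (simp add: mult_neg_pos)
      then show ?thesis using True e p by (simp add: mult_neg_pos mult_neg_neg)
    next
      case False
      then have "\<xi> < 1" using assms by simp
      then have "exp (e * ln \<xi>) > 1" using e l2 by (simp add: mult_neg_neg)
      then show ?thesis using \<open>\<xi> < 1\<close> e p by (simp add: mult_neg_neg)
    qed
  qed
qed

lemma bern_strict:
  fixes t \<alpha> :: real assumes "t \<ge> 0" "t \<noteq> 1" "\<alpha> > 0" "\<alpha> \<noteq> 1"
  shows "(\<alpha> - 1) * (t powr \<alpha> - 1 - \<alpha> * (t - 1)) > 0"
proof (cases "t = 0")
  case True
  then show ?thesis using assms by (auto simp: zero_less_mult_iff)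
next
  case False
  then have tp: "t > 0" using assms by simp
  define g where "g = (\<lambda>x::real. x powr \<alpha> - \<alpha> * x)"
  define g' where "g' = (\<lambda>x::real. \<alpha> * x powr (\<alpha> - 1) - \<alpha>)"
  have der: "DERIV g x :> g' x" if "x > 0" for x
    unfolding g_def g'_def using that
    by (auto intro!: derivative_eq_intros)
  have key: "\<exists>z. z > 0 \<and> z \<noteq> 1 \<and> (z - 1) * (t - 1) > 0 \<and> g t - g 1 = (t - 1) * g' z"
  proof (cases "t < 1")
    case True
    from MVT2[OF True, of g g'] der tp obtain z where "t < z" "z < 1" "g 1 - g t = (1 - t) * g' z"
      by (metis less_le_trans order.strict_trans2)
    moreover have "(z - 1) * (t - 1) > 0" using \<open>z < 1\<close> True by (intro mult_neg_neg) auto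
    ultimately show ?thesis using tp
      by (intro exI[of _ z]) (auto simp: algebra_simps)
  next
    case False
    then have "1 < t" using assms by simp
    from MVT2[OF this, of g g'] der obtain z where "1 < z" "z < t" "g t - g 1 = (t - 1) * g' z"
      by (metis less_le_trans zero_less_one)
    then show ?thesis using \<open>1 < t\<close> by (intro exI[of _ z]) auto
  qed
  then obtain z where z: "z > 0" "z \<noteq> 1" "(z - 1) * (t - 1) > 0" "g t - g 1 = (t - 1) * g' z" by blast
  have s: "(\<alpha> - 1) * (z - 1) * (z powr (\<alpha> - 1) - 1) > 0"
    using sign_aux[of z "\<alpha> - 1"] z assms by simp
  have "(\<alpha> - 1) * (t powr \<alpha> - 1 - \<alpha> * (t - 1)) = (\<alpha> - 1) * (g t - g 1)"
    unfolding g_def by (simp add: algebra_simps)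
  also have "\<dots> = (\<alpha> - 1) * (t - 1) * (\<alpha> * (z powr (\<alpha> - 1) - 1))"
    unfolding z(4) g'_def by (simp add: algebra_simps)
  also have "\<dots> = \<alpha> * ((t - 1) / (z - 1)) * ((\<alpha> - 1) * (z - 1) * (z powr (\<alpha> - 1) - 1))"
    using z(2) by (simp add: field_simps)
  also have "\<dots> > 0"
  proof -
    have "(t - 1) / (z - 1) > 0" using z(3) by (auto simp add: zero_less_divide_iff zero_less_mult_iff)
    then have "0 < \<alpha> * ((t - 1) / (z - 1))" using assms by (intro mult_pos_pos)
    from mult_pos_pos[OF this s] show ?thesis .
  qed
  finally show ?thesis .
qed



lemma group_sum:
  fixes f x :: "_ \<Rightarrow> real" and A :: "nat set"
  assumes "finite A" "\<forall>i\<in>A. x i \<ge> 0" "sum x A = real (card A) * c" "c \<ge> 0"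
    and T: "c > 0 \<Longrightarrow> \<forall>y\<ge>0. y \<noteq> c \<longrightarrow> f y > f c + d * (y - c)"
  shows "sum (\<lambda>i. f (x i)) A \<ge> real (card A) * f c \<and>
         (sum (\<lambda>i. f (x i)) A = real (card A) * f c \<longrightarrow> (\<forall>i\<in>A. x i = c))"
proof (cases "c = 0")
  case True
  then have "\<forall>i\<in>A. x i = 0" using assms sum_nonneg_eq_0_iff[of A x] by auto
  then show ?thesis using True by simp
next
  case False
  then have cp: "c > 0" using assms by simp
  define g where "g i = f (x i) - f c - d * (x i - c)" for i
  have g0: "\<forall>i\<in>A. g i \<ge> 0" using T[OF cp] assms(2) unfolding g_def
    by (metis diff_ge_0_iff_ge diff_self less_eq_real_def mult_zero_right add_0_right add.commute diff_diff_eq)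
  have gs: "sum g A = sum (\<lambda>i. f (x i)) A - real (card A) * f c"
  proof -
    have "sum g A = sum (\<lambda>i. f (x i)) A - real (card A) * f c - d * (sum x A - real (card A) * c)"
      unfolding g_def by (simp add: sum_subtractf sum.distrib sum_distrib_left algebra_simps)
    then show ?thesis using assms(3) by simp
  qed
  have "sum g A \<ge> 0" using g0 by (simp add: sum_nonneg)
  moreover have "sum g A = 0 \<longrightarrow> (\<forall>i\<in>A. x i = c)"
  proof
    assume "sum g A = 0"
    then have "\<forall>i\<in>A. g i = 0" using sum_nonneg_eq_0_iff[OF assms(1)] g0 by blast
    then show "\<forall>i\<in>A. x i = c" using T[OF cp] assms(2) unfolding g_def by force
  qed
  ultimately show ?thesis using gs by simp
qed

lemma split_sum:
  fixes g :: "nat \<Rightarrow> real"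
  assumes "N \<le> M"
  shows "sum g {1..M} = sum g {1..N} + sum g {N+1..M}"
proof -
  have "{1..M} = {1..N} \<union> {N+1..M}" using assms by auto
  then show ?thesis by (simp add: sum.union_disjoint[symmetric] ivl_disj_int)
qed

lemma feas_iff:
  assumes "N \<ge> 2" "N < N ^ K"
  shows "P \<in> feasible N K D \<longleftrightarrow> (\<forall>m. m \<notin> {1..N^K} \<longrightarrow> P m = 0) \<and> (\<forall>m\<in>{1..N^K}. 0 \<le> P m)
     \<and> sum P {1..N} = 1 - (real N - 1) * (D - 1) \<and> sum P {N+1..N^K} = (real N - 1) * (D - 1)"
proof -
  have c1: "sum (\<lambda>m. P m * tsc_cost N m) {1..N} = (real N - 1) * sum P {1..N}"
    by (auto simp: tsc_cost_def sum_distrib_left intro!: sum.cong)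
  have c2: "sum (\<lambda>m. P m * tsc_cost N m) {N+1..N^K} = real N * sum P {N+1..N^K}"
    by (auto simp: tsc_cost_def sum_distrib_left intro!: sum.cong)
  have t1: "sum P {1..N^K} = sum P {1..N} + sum P {N+1..N^K}"
    using split_sum[of N "N^K" P] assms by simp
  have t2: "sum (\<lambda>m. P m * tsc_cost N m) {1..N^K} = (real N - 1) * sum P {1..N} + real N * sum P {N+1..N^K}"
    using split_sum[of N "N^K" "\<lambda>m. P m * tsc_cost N m"] assms c1 c2 by simp
  have Np: "real N - 1 > 0" using assms by simp
  have ar: "(s1 + s2 = 1 \<and> 1 / (real N - 1) * ((real N - 1) * s1 + real N * s2) = D)
     \<longleftrightarrow> (s1 = 1 - (real N - 1) * (D - 1) \<and> s2 = (real N - 1) * (D - 1))" for s1 s2 :: real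
  proof
    assume L: "s1 + s2 = 1 \<and> 1 / (real N - 1) * ((real N - 1) * s1 + real N * s2) = D"
    then have s1: "s1 = 1 - s2" by simp
    from L have "(real N - 1) * s1 + real N * s2 = (real N - 1) * D" using Np by (simp add: field_simps)
    then have "(real N - 1) + s2 = (real N - 1) * D" unfolding s1 by (simp add: algebra_simps)
    then show "s1 = 1 - (real N - 1) * (D - 1) \<and> s2 = (real N - 1) * (D - 1)"
      using s1 by (simp add: algebra_simps)
  next
    assume R: "s1 = 1 - (real N - 1) * (D - 1) \<and> s2 = (real N - 1) * (D - 1)"
    then have "s1 + s2 = 1" by simp
    moreover have "(real N - 1) * s1 + real N * s2 = (real N - 1) * D"
    proof -
      have "(real N - 1) * s1 + real N * s2 = (real N - 1) * (s1 + s2) + s2" by (simp add: algebra_simps)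
      also have "\<dots> = (real N - 1) + s2" using \<open>s1 + s2 = 1\<close> by simp
      also have "\<dots> = (real N - 1) * D" using R by (simp add: algebra_simps)
      finally show ?thesis .
    qed
    ultimately show "s1 + s2 = 1 \<and> 1 / (real N - 1) * ((real N - 1) * s1 + real N * s2) = D"
      using Np by simp
  qed
  show ?thesis unfolding feasible_def using t1 t2 ar by auto
qed



lemma tan_pow:
  fixes c y \<alpha> :: real
  assumes "c > 0" "y \<ge> 0" "y \<noteq> c" "\<alpha> > 0" "\<alpha> \<noteq> 1"
  shows "(\<alpha> - 1) * y powr \<alpha> > (\<alpha> - 1) * c powr \<alpha> + ((\<alpha> - 1) * \<alpha> * c powr (\<alpha> - 1)) * (y - c)"
proof -
  define t where "t = y / c"
  have t0: "t \<ge> 0" "t \<noteq> 1" using assms by (auto simp: t_def)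
  have y: "y = c * t" using assms by (simp add: t_def)
  have B: "(\<alpha> - 1) * (t powr \<alpha> - 1 - \<alpha> * (t - 1)) > 0" using bern_strict t0 assms by simp
  have cp: "c powr \<alpha> > 0" using assms by simp
  have yp: "y powr \<alpha> = c powr \<alpha> * t powr \<alpha>" using y assms t0 by (simp add: powr_mult)
  have cm: "c powr (\<alpha> - 1) * (y - c) = c powr \<alpha> * (t - 1)"
    using assms by (simp add: powr_diff t_def field_simps)
  have "0 < c powr \<alpha> * ((\<alpha> - 1) * (t powr \<alpha> - 1 - \<alpha> * (t - 1)))" using cp B by simp
  also have "\<dots> = (\<alpha> - 1) * y powr \<alpha> - ((\<alpha> - 1) * c powr \<alpha> + (\<alpha> - 1) * \<alpha> * (c powr \<alpha> * (t - 1)))"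
    unfolding yp by (simp add: algebra_simps)
  also have "\<dots> = (\<alpha> - 1) * y powr \<alpha> - ((\<alpha> - 1) * c powr \<alpha> + ((\<alpha> - 1) * \<alpha> * c powr (\<alpha> - 1)) * (y - c))"
  proof -
    have "(\<alpha> - 1) * \<alpha> * (c powr \<alpha> * (t - 1)) = ((\<alpha> - 1) * \<alpha> * c powr (\<alpha> - 1)) * (y - c)"
      by (simp only: cm[symmetric] mult.assoc)
    then show ?thesis by simp
  qed
  finally show ?thesis by simp
qed

lemma ln_strict: "(x::real) > 0 \<Longrightarrow> x \<noteq> 1 \<Longrightarrow> ln x < x - 1"
proof -
  assume a: "x > 0" "x \<noteq> 1"
  have "ln x \<le> x - 1" by (rule ln_le_minus_one[OF a(1)])
  moreover have "ln x \<noteq> x - 1" using ln_eq_minus_one a by blast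
  ultimately show ?thesis by simp
qed

lemma tan_xlog:
  fixes c y :: real and M :: nat
  assumes "M > 0" "c > 0" "y \<ge> 0" "y \<noteq> c"
  defines "f \<equiv> (\<lambda>y::real. if y = 0 then 0 else y * ln (y / (1 / real M)))"
  shows "f y > f c + (ln (c * real M) + 1) * (y - c)"
proof (cases "y = 0")
  case True
  then show ?thesis using assms by (simp add: f_def algebra_simps)
next
  case False
  then have yp: "y > 0" using assms by simp
  have "ln (c / y) < c / y - 1" using ln_strict[of "c/y"] yp assms by simp
  then have "y * ln (c / y) < y * (c / y - 1)" using yp by simp
  moreover have "y * (c / y - 1) = c - y" using yp by (simp add: field_simps)
  ultimately have A: "y * ln (c / y) < c - y" by simp
  have l: "ln (y * real M) = ln (c * real M) - ln (c / y)"
    using yp assms by (simp add: ln_mult ln_div)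
  have "f y = y * ln (y * real M)" using False unfolding f_def by simp
  then have "f y = y * ln (c * real M) - y * ln (c / y)" unfolding l by (simp add: algebra_simps)
  moreover have "f c = c * ln (c * real M)" using assms unfolding f_def by simp
  ultimately show ?thesis using A by (simp add: algebra_simps)
qed


lemma argmin_abstract:
  fixes R \<Phi> :: "'x \<Rightarrow> real"
  assumes "Ps \<in> F" "\<forall>P\<in>F. \<Phi> Ps \<le> \<Phi> P \<and> (\<Phi> P = \<Phi> Ps \<longrightarrow> P = Ps)"
    "\<forall>P\<in>F. \<forall>Q\<in>F. R P \<le> R Q \<longleftrightarrow> \<Phi> P \<le> \<Phi> Q"
  shows "\<forall>P\<in>F. (\<forall>Q\<in>F. R P \<le> R Q) \<longleftrightarrow> P = Ps"
proof (intro ballI, rule iffI)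
  fix P assume P: "P \<in> F" and H: "\<forall>Q\<in>F. R P \<le> R Q"
  then have "\<Phi> P \<le> \<Phi> Ps" using assms by blast
  moreover have "\<Phi> Ps \<le> \<Phi> P" using assms P by blast
  ultimately show "P = Ps" using assms P by (meson order_antisym)
next
  fix P assume P: "P \<in> F" and PP: "P = Ps"
  show "\<forall>Q\<in>F. R P \<le> R Q"
  proof
    fix Q assume Q: "Q \<in> F"
    have "\<Phi> Ps \<le> \<Phi> Q" using assms(2) Q by blast
    then show "R P \<le> R Q" using assms(3)[rule_format, OF P Q] PP by simp
  qed
qed

theorem lemma1:
  fixes N K :: nat and D :: real
  defines "M \<equiv> N ^ K"
  defines "C \<equiv> 1 / (\<Sum>i<K. 1 / (real N) ^ i)"
  defines "U \<equiv> (\<lambda>m::nat. 1 / real M)"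
  defines "a \<equiv> (1 - (real N - 1) * (D - 1)) / real N"
  defines "b \<equiv> (real N - 1) * (D - 1) / (real M - real N)"
  defines "Pstar \<equiv> (\<lambda>m::nat. if m \<in> {1..N} then a else if m \<in> {N+1..M} then b else 0)"
  assumes "N \<ge> 2" and "K \<ge> 2" and "1 \<le> D" and "D \<le> 1 / C"
  shows "(\<forall>\<alpha>::real. 0 < \<alpha> \<longrightarrow>
            Pstar \<in> feasible N K D \<and>
            (\<forall>P\<in>feasible N K D.
               (\<forall>Q\<in>feasible N K D. renyi_div \<alpha> M P U \<le> renyi_div \<alpha> M Q U) \<longleftrightarrow> P = Pstar))
       \<and> (\<forall>P\<in>feasible N K D.
            (\<forall>Q\<in>feasible N K D. renyi_div_inf M P U \<le> renyi_div_inf M Q U) \<longleftrightarrow>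
            ((\<forall>m\<in>{1..N}. P m = a) \<and> (\<forall>m\<in>{N+1..M}. 0 \<le> P m \<and> P m \<le> a)
             \<and> (\<Sum>m\<in>{N+1..M}. P m) = (real N - 1) * (D - 1)))"
proof -
  have N2: "N \<ge> 2" and K2: "K \<ge> 2" and D1: "1 \<le> D" and DC: "D \<le> 1 / C" using assms by auto
  have "N ^ 2 \<le> N ^ K" using N2 K2 by (intro power_increasing) auto
  moreover have "N < N ^ 2" using N2 by (simp add: power2_eq_square)
  ultimately have MN': "N < N ^ K" by simp
  then have MN: "N < M" unfolding M_def .
  have Mpos: "real M > 0" using MN by simp
  have MNr: "real M - real N > 0" using MN by simp
  have Np1: "real N - 1 > 0" using N2 by simp
  define s2 where "s2 = (real N - 1) * (D - 1)"
  have geo: "1 / C = (\<Sum>i<K. (1 / real N) ^ i)" unfolding C_def by (simp add: power_one_over)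
  have pk: "(1 / real N) ^ K = 1 / real M" unfolding M_def by (simp add: power_one_over)
  have geo2: "(real N - 1) * ((\<Sum>i<K. (1 / real N) ^ i) - 1) = 1 - real N / real M"
  proof -
    have ne: "1 / real N \<noteq> 1" using N2 by simp
    have "(\<Sum>i<K. (1 / real N) ^ i) = (1 / real M - 1) / (1 / real N - 1)"
      using geometric_sum[OF ne, of K] pk by simp
    then show ?thesis using Np1 Mpos N2 by (simp add: field_simps)
  qed
  have s2le: "s2 \<le> 1 - real N / real M"
  proof -
    have "s2 \<le> (real N - 1) * (1 / C - 1)" unfolding s2_def using DC Np1
      by (intro mult_left_mono) auto
    then show ?thesis using geo geo2 by simp
  qed
  have s2ge: "s2 \<ge> 0" unfolding s2_def using Np1 D1 by simp
  have NM: "real N / real M > 0" using Mpos N2 by simp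
  have apos: "a > 0" unfolding a_def s2_def[symmetric] using s2le NM N2 by simp
  have b0: "b \<ge> 0" unfolding b_def s2_def[symmetric] using s2ge MNr by simp
  have Na: "real N * a = 1 - s2" unfolding a_def s2_def using N2 by simp
  have Mb: "(real M - real N) * b = s2" unfolding b_def s2_def using MNr by simp
  have ba: "b \<le> a"
  proof -
    have "s2 * real M \<le> (1 - real N / real M) * real M" using s2le Mpos by (intro mult_right_mono) auto
    moreover have "(1 - real N / real M) * real M = real M - real N" using Mpos by (simp add: field_simps)
    ultimately have "s2 * real M \<le> real M - real N" by simp
    then have "real N * s2 \<le> (1 - s2) * (real M - real N)" by (simp add: algebra_simps)
    then have "real N * s2 / (real M - real N) \<le> 1 - s2" using MNr by (simp add: pos_divide_le_eq)
    then have "real N * b \<le> real N * a" unfolding Na b_def s2_def[symmetric] by simp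
    then show ?thesis using N2 by simp
  qed
  have card2: "real (card {N+1..M}) = real M - real N" using MN by simp
  have card1: "real (card {1..N}) = real N" by simp
  have Ps1: "sum Pstar {1..N} = real N * a"
  proof -
    have "sum Pstar {1..N} = sum (\<lambda>_. a) {1..N}" by (rule sum.cong) (auto simp: Pstar_def)
    then show ?thesis by simp
  qed
  have Ps2: "sum Pstar {N+1..M} = (real M - real N) * b"
  proof -
    have "sum Pstar {N+1..M} = sum (\<lambda>_. b) {N+1..M}" by (rule sum.cong) (auto simp: Pstar_def)
    then show ?thesis using card2 by simp
  qed
  note FI = feas_iff[OF N2 MN', of _ D, folded M_def]
  have PF: "Pstar \<in> feasible N K D"
  proof -
    have "\<forall>m. m \<notin> {1..M} \<longrightarrow> Pstar m = 0" using MN by (auto simp: Pstar_def)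
    moreover have "\<forall>m\<in>{1..M}. 0 \<le> Pstar m" using apos b0 by (auto simp: Pstar_def)
    ultimately show ?thesis unfolding FI using Ps1 Ps2 Na Mb unfolding s2_def by simp
  qed
  have PhiMin: "\<forall>P\<in>feasible N K D. sum (\<lambda>m. f (Pstar m)) {1..M} \<le> sum (\<lambda>m. f (P m)) {1..M}
        \<and> (sum (\<lambda>m. f (P m)) {1..M} = sum (\<lambda>m. f (Pstar m)) {1..M} \<longrightarrow> P = Pstar)"
    if Ta: "\<forall>y\<ge>0. y \<noteq> a \<longrightarrow> f y > f a + da * (y - a)"
    and Tb: "b > 0 \<Longrightarrow> \<forall>y\<ge>0. y \<noteq> b \<longrightarrow> f y > f b + db * (y - b)" for f :: "real \<Rightarrow> real" and da db
  proof
    fix P assume P: "P \<in> feasible N K D"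
    have PP: "(\<forall>m. m \<notin> {1..M} \<longrightarrow> P m = 0) \<and> (\<forall>m\<in>{1..M}. 0 \<le> P m)
        \<and> sum P {1..N} = 1 - s2 \<and> sum P {N+1..M} = s2"
      using P unfolding FI s2_def[symmetric] .
    then have P0: "\<forall>m. m \<notin> {1..M} \<longrightarrow> P m = 0" and Pn: "\<forall>m\<in>{1..M}. 0 \<le> P m" by blast+
    have P1: "sum P {1..N} = real (card {1..N}) * a" using PP Na card1 by simp
    have P2: "sum P {N+1..M} = real (card {N+1..M}) * b" using PP Mb card2 by simp
    have Pn1: "\<forall>i\<in>{1..N}. P i \<ge> 0" using Pn MN by auto
    have Pn2: "\<forall>i\<in>{N+1..M}. P i \<ge> 0" using Pn MN by auto
    have G1: "sum (\<lambda>i. f (P i)) {1..N} \<ge> real (card {1..N}) * f a \<and>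
         (sum (\<lambda>i. f (P i)) {1..N} = real (card {1..N}) * f a \<longrightarrow> (\<forall>i\<in>{1..N}. P i = a))"
      by (rule group_sum[OF finite_atLeastAtMost Pn1 P1 less_imp_le[OF apos]]) (rule Ta)
    have G2: "sum (\<lambda>i. f (P i)) {N+1..M} \<ge> real (card {N+1..M}) * f b \<and>
         (sum (\<lambda>i. f (P i)) {N+1..M} = real (card {N+1..M}) * f b \<longrightarrow> (\<forall>i\<in>{N+1..M}. P i = b))"
      by (rule group_sum[OF finite_atLeastAtMost Pn2 P2 b0]) (rule Tb)
    have S1: "sum (\<lambda>m. f (Pstar m)) {1..N} = real (card {1..N}) * f a"
    proof -
      have "sum (\<lambda>m. f (Pstar m)) {1..N} = sum (\<lambda>_. f a) {1..N}" by (rule sum.cong) (auto simp: Pstar_def)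
      then show ?thesis by simp
    qed
    have S2: "sum (\<lambda>m. f (Pstar m)) {N+1..M} = real (card {N+1..M}) * f b"
    proof -
      have "sum (\<lambda>m. f (Pstar m)) {N+1..M} = sum (\<lambda>_. f b) {N+1..M}" by (rule sum.cong) (auto simp: Pstar_def)
      then show ?thesis by simp
    qed
    have sp: "sum (\<lambda>m. f (P m)) {1..M} = sum (\<lambda>m. f (P m)) {1..N} + sum (\<lambda>m. f (P m)) {N+1..M}"
      using split_sum[of N M] MN by simp
    have ss: "sum (\<lambda>m. f (Pstar m)) {1..M} = real (card {1..N}) * f a + real (card {N+1..M}) * f b"
      using split_sum[of N M "\<lambda>m. f (Pstar m)"] MN S1 S2 by simp
    show "sum (\<lambda>m. f (Pstar m)) {1..M} \<le> sum (\<lambda>m. f (P m)) {1..M}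
        \<and> (sum (\<lambda>m. f (P m)) {1..M} = sum (\<lambda>m. f (Pstar m)) {1..M} \<longrightarrow> P = Pstar)"
    proof
      show "sum (\<lambda>m. f (Pstar m)) {1..M} \<le> sum (\<lambda>m. f (P m)) {1..M}" using sp ss G1 G2 by linarith
    next
      show "sum (\<lambda>m. f (P m)) {1..M} = sum (\<lambda>m. f (Pstar m)) {1..M} \<longrightarrow> P = Pstar"
      proof
        assume "sum (\<lambda>m. f (P m)) {1..M} = sum (\<lambda>m. f (Pstar m)) {1..M}"
        then have q1: "sum (\<lambda>i. f (P i)) {1..N} = real (card {1..N}) * f a"
          and q2: "sum (\<lambda>i. f (P i)) {N+1..M} = real (card {N+1..M}) * f b"
          using sp ss G1 G2 by linarith+
        have E1: "\<forall>i\<in>{1..N}. P i = a" using G1 q1 by blast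
        have E2: "\<forall>i\<in>{N+1..M}. P i = b" using G2 q2 by blast
        show "P = Pstar"
        proof
          fix m
          show "P m = Pstar m"
          proof (cases "m \<in> {1..N}")
            case True then show ?thesis using E1 by (simp add: Pstar_def)
          next
            case False
            show ?thesis
            proof (cases "m \<in> {N+1..M}")
              case True then show ?thesis using E2 False by (simp add: Pstar_def)
            next
              case F2: False
              then have "m \<notin> {1..M}" using False by auto
              then have "P m = 0" using P0 by blast
              moreover have "Pstar m = 0" using False F2 unfolding Pstar_def by auto
              ultimately show ?thesis by simp
            qed
          qed
        qed
      qed
    qed
  qed
  have feasPP: "(\<forall>m. m \<notin> {1..M} \<longrightarrow> P m = 0) \<and> (\<forall>m\<in>{1..M}. 0 \<le> P m)
        \<and> sum P {1..N} = 1 - s2 \<and> sum P {N+1..M} = s2" if "P \<in> feasible N K D" for P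
    using that unfolding FI s2_def[symmetric] .
  have feasP: "\<forall>m. m \<notin> {1..M} \<longrightarrow> P m = 0" "\<forall>m\<in>{1..M}. 0 \<le> P m" "sum P {1..M} = 1"
    "sum P {1..N} = real N * a" "sum P {N+1..M} = s2"
    if "P \<in> feasible N K D" for P
  proof -
    note h = feasPP[OF that]
    have "sum P {1..M} = 1" using that unfolding feasible_def M_def by blast
    then show "\<forall>m. m \<notin> {1..M} \<longrightarrow> P m = 0" "\<forall>m\<in>{1..M}. 0 \<le> P m" "sum P {1..M} = 1"
      "sum P {1..N} = real N * a" "sum P {N+1..M} = s2" using h Na by auto
  qed
  have fin: "\<forall>P\<in>feasible N K D.
               (\<forall>Q\<in>feasible N K D. renyi_div \<alpha> M P U \<le> renyi_div \<alpha> M Q U) \<longleftrightarrow> P = Pstar"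
    if al: "0 < \<alpha>" for \<alpha> :: real
  proof (cases "\<alpha> = 1")
    case True
    define f1 where "f1 = (\<lambda>y::real. if y = 0 then 0 else y * ln (y / (1 / real M)))"
    have R: "renyi_div \<alpha> M P U = sum (\<lambda>m. f1 (P m)) {1..M}" for P
      unfolding renyi_div_def U_def f1_def using True by simp
    have T: "\<forall>y\<ge>0. y \<noteq> c \<longrightarrow> f1 y > f1 c + (ln (c * real M) + 1) * (y - c)" if "c > 0" for c
      using tan_xlog[of M c] Mpos that unfolding f1_def by auto
    show ?thesis
      by (rule argmin_abstract[OF PF, where \<Phi> = "\<lambda>P. sum (\<lambda>m. f1 (P m)) {1..M}"])
         (use PhiMin[OF T[OF apos] T] R in auto)
  next
    case False
    define k where "k = (1 / real M) powr (1 - \<alpha>)"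
    have kp: "k > 0" unfolding k_def using Mpos by simp
    define Ph where "Ph P = sum (\<lambda>m. P m powr \<alpha>) {1..M}" for P :: "nat \<Rightarrow> real"
    have R: "renyi_div \<alpha> M P U = 1 / (\<alpha> - 1) * ln (k * Ph P)" for P
      unfolding renyi_div_def U_def Ph_def k_def using False by (simp add: sum_distrib_left mult.commute)
    have Phpos: "Ph P > 0" if "P \<in> feasible N K D" for P
    proof -
      have "\<exists>m\<in>{1..M}. P m > 0"
      proof (rule ccontr)
        assume "\<not> ?thesis"
        then have "\<forall>m\<in>{1..M}. P m = 0" using feasP(2)[OF that] by force
        then have "sum P {1..M} = 0" by simp
        then show False using feasP(3)[OF that] by simp
      qed
      then obtain m where "m \<in> {1..M}" "P m > 0" by blast
      then show ?thesis unfolding Ph_def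
        by (intro sum_pos2[of "{1..M}" m]) auto
    qed
    define f where "f y = (\<alpha> - 1) * y powr \<alpha>" for y :: real
    have T: "\<forall>y\<ge>0. y \<noteq> c \<longrightarrow> f y > f c + ((\<alpha> - 1) * \<alpha> * c powr (\<alpha> - 1)) * (y - c)" if "c > 0" for c
      using tan_pow[of c _ \<alpha>] that al False unfolding f_def by auto
    have fs: "sum (\<lambda>m. f (P m)) {1..M} = (\<alpha> - 1) * Ph P" for P
      unfolding f_def Ph_def by (simp add: sum_distrib_left)
    have cmp: "renyi_div \<alpha> M P U \<le> renyi_div \<alpha> M Q U \<longleftrightarrow> (\<alpha> - 1) * Ph P \<le> (\<alpha> - 1) * Ph Q"
      if "P \<in> feasible N K D" "Q \<in> feasible N K D" for P Q
    proof -
      have pp: "k * Ph P > 0" "k * Ph Q > 0" using kp Phpos that by auto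
      have lq: "ln (k * Ph P) \<le> ln (k * Ph Q) \<longleftrightarrow> Ph P \<le> Ph Q" using pp kp by simp
      have lq2: "ln (k * Ph Q) \<le> ln (k * Ph P) \<longleftrightarrow> Ph Q \<le> Ph P" using pp kp by simp
      show ?thesis
      proof (cases "\<alpha> > 1")
        case True
        then show ?thesis unfolding R using lq by (simp add: divide_le_cancel mult_le_cancel_left_pos)
      next
        case c2: False
        then have "\<alpha> < 1" using False by simp
        then show ?thesis unfolding R using lq2 by (simp add: divide_le_cancel mult_le_cancel_left_neg)
      qed
    qed
    show ?thesis
      by (rule argmin_abstract[OF PF, where \<Phi> = "\<lambda>P. sum (\<lambda>m. f (P m)) {1..M}"])
         (use PhiMin[OF T[OF apos] T] cmp fs in auto)
  qed
  define mx where "mx P = Max ((\<lambda>m. P m / U m) ` {1..M})" for P :: "nat \<Rightarrow> real"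
  define A0 where "A0 = a / (1 / real M)"
  have A0p: "A0 > 0" unfolding A0_def using apos Mpos by simp
  have Ri: "renyi_div_inf M P U = ln (mx P)" for P unfolding renyi_div_inf_def mx_def ..
  have fin1: "finite ((\<lambda>m. P m / U m) ` {1..M})" "(\<lambda>m. P m / U m) ` {1..M} \<noteq> {}" for P
    using MN by auto
  have mxle: "mx P \<le> A0 \<longleftrightarrow> (\<forall>m\<in>{1..M}. P m \<le> a)" for P
    unfolding mx_def A0_def Max_le_iff[OF fin1] U_def using Mpos by (auto simp: divide_le_cancel)
  have mxge: "mx Q \<ge> A0" if Q: "Q \<in> feasible N K D" for Q
  proof -
    have "\<exists>m\<in>{1..N}. Q m \<ge> a"
    proof (rule ccontr)
      assume "\<not> ?thesis"
      then have "\<forall>m\<in>{1..N}. Q m < a" by auto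
      then have "sum Q {1..N} < sum (\<lambda>_. a) {1..N}" using N2 by (intro sum_strict_mono) auto
      then show False using feasP(4)[OF Q] by simp
    qed
    then obtain m where m: "m \<in> {1..N}" "Q m \<ge> a" by blast
    then have mM: "m \<in> {1..M}" using MN by auto
    have "A0 \<le> Q m / U m" unfolding A0_def U_def using m Mpos by (simp add: divide_le_cancel)
    also have "\<dots> \<le> mx Q" unfolding mx_def using mM fin1 by (intro Max_ge) auto
    finally show ?thesis .
  qed
  have mxs: "mx Pstar \<le> A0" unfolding mxle using ba apos by (auto simp: Pstar_def)
  have inf1: "(\<forall>Q\<in>feasible N K D. renyi_div_inf M P U \<le> renyi_div_inf M Q U) \<longleftrightarrow> (\<forall>m\<in>{1..M}. P m \<le> a)"
    if P: "P \<in> feasible N K D" for P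
  proof
    assume H: "\<forall>Q\<in>feasible N K D. renyi_div_inf M P U \<le> renyi_div_inf M Q U"
    then have "ln (mx P) \<le> ln (mx Pstar)" using PF Ri by auto
    moreover have "mx P > 0" "mx Pstar > 0" using mxge[OF P] mxge[OF PF] A0p by auto
    ultimately have "mx P \<le> mx Pstar" by simp
    then have "mx P \<le> A0" using mxs by simp
    then show "\<forall>m\<in>{1..M}. P m \<le> a" using mxle by simp
  next
    assume "\<forall>m\<in>{1..M}. P m \<le> a"
    then have h: "mx P \<le> A0" using mxle by simp
    have "mx P > 0" using mxge[OF P] A0p by auto
    then show "\<forall>Q\<in>feasible N K D. renyi_div_inf M P U \<le> renyi_div_inf M Q U"
      unfolding Ri using h mxge A0p by (metis ln_le_cancel_iff order_trans less_le_trans)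
  qed
  have inf2: "(\<forall>m\<in>{1..M}. P m \<le> a) \<longleftrightarrow> ((\<forall>m\<in>{1..N}. P m = a) \<and> (\<forall>m\<in>{N+1..M}. 0 \<le> P m \<and> P m \<le> a)
             \<and> (\<Sum>m\<in>{N+1..M}. P m) = (real N - 1) * (D - 1))"
    if P: "P \<in> feasible N K D" for P
  proof
    assume H: "\<forall>m\<in>{1..M}. P m \<le> a"
    have "\<forall>m\<in>{1..N}. P m = a"
    proof -
      have nn: "\<forall>m\<in>{1..N}. a - P m \<ge> 0" using H MN by auto
      have "sum (\<lambda>m. a - P m) {1..N} = 0" using feasP(4)[OF P] by (simp add: sum_subtractf)
      then have "\<forall>m\<in>{1..N}. a - P m = 0" using sum_nonneg_eq_0_iff[of "{1..N}" "\<lambda>m. a - P m"] nn by auto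
      then show ?thesis by simp
    qed
    moreover have "\<forall>m\<in>{N+1..M}. 0 \<le> P m \<and> P m \<le> a" using H feasP(2)[OF P] by auto
    ultimately show "(\<forall>m\<in>{1..N}. P m = a) \<and> (\<forall>m\<in>{N+1..M}. 0 \<le> P m \<and> P m \<le> a)
             \<and> (\<Sum>m\<in>{N+1..M}. P m) = (real N - 1) * (D - 1)" using feasP(5)[OF P] s2_def by simp
  next
    assume H: "(\<forall>m\<in>{1..N}. P m = a) \<and> (\<forall>m\<in>{N+1..M}. 0 \<le> P m \<and> P m \<le> a)
             \<and> (\<Sum>m\<in>{N+1..M}. P m) = (real N - 1) * (D - 1)"
    show "\<forall>m\<in>{1..M}. P m \<le> a"
    proof
      fix m assume "m \<in> {1..M}"
      then have "m \<in> {1..N} \<or> m \<in> {N+1..M}" by auto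
      then show "P m \<le> a" using H by auto
    qed
  qed
  show ?thesis
  proof (intro conjI allI impI)
    fix \<alpha> :: real assume "0 < \<alpha>"
    then show "Pstar \<in> feasible N K D" "\<forall>P\<in>feasible N K D.
               (\<forall>Q\<in>feasible N K D. renyi_div \<alpha> M P U \<le> renyi_div \<alpha> M Q U) \<longleftrightarrow> P = Pstar"
      using fin PF by blast+
  next
    show "\<forall>P\<in>feasible N K D. (\<forall>Q\<in>feasible N K D. renyi_div_inf M P U \<le> renyi_div_inf M Q U) \<longleftrightarrow>
            ((\<forall>m\<in>{1..N}. P m = a) \<and> (\<forall>m\<in>{N+1..M}. 0 \<le> P m \<and> P m \<le> a)
             \<and> (\<Sum>m\<in>{N+1..M}. P m) = (real N - 1) * (D - 1))"
    proof
      fix P assume P: "P \<in> feasible N K D"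
      show "(\<forall>Q\<in>feasible N K D. renyi_div_inf M P U \<le> renyi_div_inf M Q U) \<longleftrightarrow>
            ((\<forall>m\<in>{1..N}. P m = a) \<and> (\<forall>m\<in>{N+1..M}. 0 \<le> P m \<and> P m \<le> a)
             \<and> (\<Sum>m\<in>{N+1..M}. P m) = (real N - 1) * (D - 1))"
        using inf1[OF P] inf2[OF P] by (rule trans)
    qed
  qed
qed

end
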